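(* Let $v$ and $v'$ be distinct false twin vertices of a graph $G$. Then $\tilde\gamma_{gr}^{\times 2}(G-v')\le\tilde\gamma_{gr}^{\times 2}(G)\le\tilde\gamma_{gr}^{\times 2}(G-v')+1$. Moreover, if $S$ is an MDNS of $G$ and $\tilde\gamma_{gr}^{\times 2}(G)=\tilde\gamma_{gr}^{\times 2}(G-v')+1$, then at least one of $v,v'$ belongs to $S$.
   Context: Graphs are finite, simple, undirected; $N(v)$ open and $N[v]$ closed neighborhood; $v,v'$ are false twins if $N(v)=N(v')$. A sequence $S=(v_1,\dots,v_k)$ of distinct vertices is a double neighborhood sequence (DNS) if for each $i$ some $u\in N[v_i]$ satisfies $|\{j<i: u\in N[v_j]\}|\le 1$. An MDNS is a DNS of maximum length; $\tilde\gamma_{gr}^{\times 2}(G)$ is that length. *)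

theory Defs
  imports Main
begin

definition simple_graph :: "'a set \<Rightarrow> ('a \<Rightarrow> 'a \<Rightarrow> bool) \<Rightarrow> bool" where
  "simple_graph V E \<longleftrightarrow> finite V \<and> (\<forall>x y. E x y \<longrightarrow> E y x)
     \<and> (\<forall>x. \<not> E x x) \<and> (\<forall>x y. E x y \<longrightarrow> x \<in> V \<and> y \<in> V)"

definition open_nbhd :: "'a set \<Rightarrow> ('a \<Rightarrow> 'a \<Rightarrow> bool) \<Rightarrow> 'a \<Rightarrow> 'a set" where
  "open_nbhd V E v = {u \<in> V. E v u}"

definition closed_nbhd :: "'a set \<Rightarrow> ('a \<Rightarrow> 'a \<Rightarrow> bool) \<Rightarrow> 'a \<Rightarrow> 'a set" where
  "closed_nbhd V E v = insert v (open_nbhd V E v)"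

definition del_vertex :: "'a set \<Rightarrow> 'a \<Rightarrow> 'a set" where
  "del_vertex V w = V - {w}"

definition false_twins :: "'a set \<Rightarrow> ('a \<Rightarrow> 'a \<Rightarrow> bool) \<Rightarrow> 'a \<Rightarrow> 'a \<Rightarrow> bool" where
  "false_twins V E v v' \<longleftrightarrow> v \<in> V \<and> v' \<in> V \<and> open_nbhd V E v = open_nbhd V E v'"

definition is_DNS :: "'a set \<Rightarrow> ('a \<Rightarrow> 'a \<Rightarrow> bool) \<Rightarrow> 'a list \<Rightarrow> bool" where
  "is_DNS V E S \<longleftrightarrow> distinct S \<and> set S \<subseteq> V \<and>
     (\<forall>i < length S. \<exists>u \<in> closed_nbhd V E (S ! i).
        card {j. j < i \<and> u \<in> closed_nbhd V E (S ! j)} \<le> 1)"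

definition gamma_gr2 :: "'a set \<Rightarrow> ('a \<Rightarrow> 'a \<Rightarrow> bool) \<Rightarrow> nat" where
  "gamma_gr2 V E = Max {length S | S. is_DNS V E S}"

definition is_MDNS :: "'a set \<Rightarrow> ('a \<Rightarrow> 'a \<Rightarrow> bool) \<Rightarrow> 'a list \<Rightarrow> bool" where
  "is_MDNS V E S \<longleftrightarrow> is_DNS V E S \<and> length S = gamma_gr2 V E"

end

theory Submission
  imports Defs
begin

definition sw :: "'a \<Rightarrow> 'a \<Rightarrow> 'a \<Rightarrow> 'a" where
  "sw a b x = (if x = a then b else if x = b then a else x)"

lemma len_filter_mono:
  "(\<forall>y\<in>set xs. P y \<longrightarrow> Q y) \<Longrightarrow> length (filter P xs) \<le> length (filter Q xs)"
  by (induction xs) auto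

lemma filter_split:
  "filter P S = xs' @ x # ys' \<Longrightarrow> \<exists>xs ys. S = xs @ x # ys \<and> filter P xs = xs'"
proof (induction S arbitrary: xs')
  case Nil
  then show ?case by simp
next
  case (Cons a S)
  show ?case
  proof (cases "P a")
    case True
    show ?thesis
    proof (cases xs')
      case Nil
      then show ?thesis using Cons.prems True by (intro exI[of _ "[]"] exI[of _ S]) auto
    next
      case (Cons b xs'')
      then have "filter P S = xs'' @ x # ys'" using Cons.prems True by auto
      from Cons.IH[OF this] obtain xs ys where "S = xs @ x # ys" "filter P xs = xs''" by blast
      then show ?thesis using Cons Cons.prems True
        by (intro exI[of _ "a # xs"] exI[of _ ys]) auto
    qed
  next
    case False
    then have "filter P S = xs' @ x # ys'" using Cons.prems by auto
    from Cons.IH[OF this] obtain xs ys where "S = xs @ x # ys" "filter P xs = xs'" by blast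
    then show ?thesis using False by (intro exI[of _ "a # xs"] exI[of _ ys]) auto
  qed
qed

lemma card_take:
  assumes "i \<le> length S"
  shows "card {j. j < i \<and> P (S ! j)} = length (filter P (take i S))"
proof -
  have "length (filter P (take i S)) = card {j. j < length (take i S) \<and> P (take i S ! j)}"
    by (rule length_filter_conv_card)
  also have "\<dots> = card {j. j < i \<and> P (S ! j)}"
    using assms by (intro arg_cong[where f=card]) (auto simp: min_def)
  finally show ?thesis by simp
qed

lemma DNS_iff:
  "is_DNS V E S \<longleftrightarrow> distinct S \<and> set S \<subseteq> V \<and>
    (\<forall>xs x ys. S = xs @ x # ys \<longrightarrow>
      (\<exists>u\<in>closed_nbhd V E x. length (filter (\<lambda>y. u \<in> closed_nbhd V E y) xs) \<le> 1))"
  (is "_ \<longleftrightarrow> _ \<and> _ \<and> ?G")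
proof -
  have "(\<forall>i<length S. \<exists>u\<in>closed_nbhd V E (S!i).
          card {j. j<i \<and> u \<in> closed_nbhd V E (S!j)} \<le> 1) \<longleftrightarrow> ?G"
  proof
    assume L: "\<forall>i<length S. \<exists>u\<in>closed_nbhd V E (S!i).
          card {j. j<i \<and> u \<in> closed_nbhd V E (S!j)} \<le> 1"
    show ?G
    proof (intro allI impI)
      fix xs x ys assume S: "S = xs @ x # ys"
      then have a: "length xs < length S" and b: "S ! length xs = x" and c: "take (length xs) S = xs"
        by auto
      from L a b obtain u where u: "u \<in> closed_nbhd V E x"
        "card {j. j < length xs \<and> u \<in> closed_nbhd V E (S!j)} \<le> 1" by blast
      with card_take[of "length xs" S "\<lambda>y. u \<in> closed_nbhd V E y"] a c
      show "\<exists>u\<in>closed_nbhd V E x. length (filter (\<lambda>y. u \<in> closed_nbhd V E y) xs) \<le> 1"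
        by auto
    qed
  next
    assume R: ?G
    show "\<forall>i<length S. \<exists>u\<in>closed_nbhd V E (S!i).
          card {j. j<i \<and> u \<in> closed_nbhd V E (S!j)} \<le> 1"
    proof (intro allI impI)
      fix i assume i: "i < length S"
      have "S = take i S @ S!i # drop (Suc i) S" using i by (simp add: id_take_nth_drop)
      with R obtain u where u: "u \<in> closed_nbhd V E (S!i)"
        "length (filter (\<lambda>y. u \<in> closed_nbhd V E y) (take i S)) \<le> 1" by blast
      with card_take[of i S "\<lambda>y. u \<in> closed_nbhd V E y"] i
      show "\<exists>u\<in>closed_nbhd V E (S!i). card {j. j<i \<and> u \<in> closed_nbhd V E (S!j)} \<le> 1"
        by (intro bexI[of _ u]) auto
    qed
  qed
  then show ?thesis unfolding is_DNS_def by blast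
qed

lemma gamma_ge:
  assumes "finite V" "is_DNS V E S"
  shows "length S \<le> gamma_gr2 V E"
proof -
  have "{length S | S. is_DNS V E S} \<subseteq> {..card V}"
  proof
    fix n assume "n \<in> {length S | S. is_DNS V E S}"
    then obtain T where "n = length T" "is_DNS V E T" by blast
    then have "distinct T" "set T \<subseteq> V" by (auto simp: is_DNS_def)
    then show "n \<in> {..card V}" using \<open>n = length T\<close> assms(1)
      by (metis atMost_iff card_mono distinct_card)
  qed
  then have "finite {length S | S. is_DNS V E S}" using finite_subset by blast
  then show ?thesis unfolding gamma_gr2_def using assms(2) by (intro Max_ge) auto
qed

lemma gamma_ex:
  assumes "finite V"
  shows "\<exists>S. is_DNS V E S \<and> length S = gamma_gr2 V E"
proof -
  have "{length S | S. is_DNS V E S} \<subseteq> {..card V}"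
  proof
    fix n assume "n \<in> {length S | S. is_DNS V E S}"
    then obtain T where "n = length T" "is_DNS V E T" by blast
    then have "distinct T" "set T \<subseteq> V" by (auto simp: is_DNS_def)
    then show "n \<in> {..card V}" using \<open>n = length T\<close> assms(1)
      by (metis atMost_iff card_mono distinct_card)
  qed
  then have f: "finite {length S | S. is_DNS V E S}" using finite_subset by blast
  have "is_DNS V E []" by (simp add: is_DNS_def)
  then have "{length S | S. is_DNS V E S} \<noteq> {}" by blast
  from Max_in[OF f this] obtain T where "Max {length S | S. is_DNS V E S} = length T" "is_DNS V E T"
    by auto
  then have "is_DNS V E T \<and> length T = gamma_gr2 V E" unfolding gamma_gr2_def by simp
  then show ?thesis by blast
qed

lemma E_twin:
  assumes "simple_graph V E" "false_twins V E v v'"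
  shows "E x v \<longleftrightarrow> E x v'"
proof -
  have s: "\<And>x y. E x y \<Longrightarrow> E y x" and i: "\<And>x y. E x y \<Longrightarrow> x \<in> V \<and> y \<in> V"
    using assms(1) unfolding simple_graph_def by blast+
  have n: "{u \<in> V. E v u} = {u \<in> V. E v' u}"
    using assms(2) unfolding false_twins_def open_nbhd_def by blast
  show ?thesis
  proof
    assume "E x v"
    then have a: "E v x" by (rule s)
    then have "x \<in> {u \<in> V. E v u}" using i by simp
    then have "x \<in> {u \<in> V. E v' u}" using n by simp
    then have "E v' x" by simp
    then show "E x v'" by (rule s)
  next
    assume "E x v'"
    then have a: "E v' x" by (rule s)
    then have "x \<in> {u \<in> V. E v' u}" using i by simp
    then have "x \<in> {u \<in> V. E v u}" using n by simp
    then have "E v x" by simp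
    then show "E x v" by (rule s)
  qed
qed

lemma part1:
  assumes "is_DNS (V - {w}) E S"
  shows "is_DNS V E S"
proof -
  have d: "distinct S" "set S \<subseteq> V - {w}" using assms by (auto simp: is_DNS_def)
  have G: "\<forall>xs x ys. S = xs @ x # ys \<longrightarrow>
      (\<exists>u\<in>closed_nbhd (V - {w}) E x. length (filter (\<lambda>y. u \<in> closed_nbhd (V - {w}) E y) xs) \<le> 1)"
    using assms[unfolded DNS_iff] by (rule conjunct2[OF conjunct2])
  show ?thesis unfolding DNS_iff
  proof (intro conjI allI impI)
    show "distinct S" "set S \<subseteq> V" using d by auto
    fix xs x ys assume S: "S = xs @ x # ys"
    then obtain u where u: "u \<in> closed_nbhd (V - {w}) E x"
      "length (filter (\<lambda>y. u \<in> closed_nbhd (V - {w}) E y) xs) \<le> 1" using G by blast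
    have xw: "x \<noteq> w" using S d by auto
    then have uw: "u \<noteq> w" using u(1) by (auto simp: closed_nbhd_def open_nbhd_def)
    have "u \<in> closed_nbhd V E x" using u(1) by (auto simp: closed_nbhd_def open_nbhd_def)
    moreover have "length (filter (\<lambda>y. u \<in> closed_nbhd V E y) xs)
        \<le> length (filter (\<lambda>y. u \<in> closed_nbhd (V - {w}) E y) xs)"
      using uw by (intro len_filter_mono) (auto simp: closed_nbhd_def open_nbhd_def)
    ultimately show "\<exists>u\<in>closed_nbhd V E x. length (filter (\<lambda>y. u \<in> closed_nbhd V E y) xs) \<le> 1"
      using u(2) le_trans by blast
  qed
qed

lemma sw_E:
  assumes "simple_graph V E" "false_twins V E v v'" "v \<noteq> v'"
  shows "E (sw v v' x) (sw v v' u) \<longleftrightarrow> E x u"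
proof -
  have s: "\<And>x y. E x y \<Longrightarrow> E y x" and irr: "\<And>x. \<not> E x x"
    using assms(1) unfolding simple_graph_def by blast+
  have t: "\<And>x. E x v \<longleftrightarrow> E x v'" using E_twin[OF assms(1,2)] by blast
  have t2: "\<And>y. E v y \<longleftrightarrow> E v' y"
  proof -
    fix y
    show "E v y \<longleftrightarrow> E v' y" using t[of y] s[of v y] s[of y v] s[of v' y] s[of y v'] by blast
  qed
  have nv: "\<not> E v v'" "\<not> E v' v" using t[of v] t[of v'] irr[of v] irr[of v'] t2[of v] by blast+
  have ne2: "v' \<noteq> v" using assms(3) by blast
  show ?thesis unfolding sw_def
    by (cases "x = v"; cases "x = v'"; cases "u = v"; cases "u = v'") (simp_all add: t2 nv irr assms(3) ne2 t)
qed

lemma sw_N: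
  assumes "simple_graph V E" "false_twins V E v v'" "v \<noteq> v'"
  shows "sw v v' u \<in> closed_nbhd V E (sw v v' x) \<longleftrightarrow> u \<in> closed_nbhd V E x"
proof -
  have V: "v \<in> V" "v' \<in> V" using assms(2) unfolding false_twins_def by auto
  have inj: "sw v v' u = sw v v' x \<longleftrightarrow> u = x" unfolding sw_def by auto
  have inV: "sw v v' u \<in> V \<longleftrightarrow> u \<in> V" using V unfolding sw_def by auto
  show ?thesis unfolding closed_nbhd_def open_nbhd_def
    using inj inV sw_E[OF assms, of x u] by auto
qed

lemma swap_DNS:
  assumes "simple_graph V E" "false_twins V E v v'" "v \<noteq> v'" "is_DNS V E S"
  shows "is_DNS V E (map (sw v v') S)"
proof -
  have V: "v \<in> V" "v' \<in> V" using assms(2) unfolding false_twins_def by auto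
  have inj: "inj (sw v v')" unfolding inj_def sw_def by auto
  have d: "distinct S" "set S \<subseteq> V" using assms(4) by (auto simp: is_DNS_def)
  have c: "\<forall>i < length S. \<exists>u \<in> closed_nbhd V E (S ! i).
        card {j. j < i \<and> u \<in> closed_nbhd V E (S ! j)} \<le> 1"
    using assms(4) by (auto simp: is_DNS_def)
  show ?thesis unfolding is_DNS_def
  proof (intro conjI allI impI)
    show "distinct (map (sw v v') S)" using d inj by (simp add: distinct_map inj_on_def inj_def)
    show "set (map (sw v v') S) \<subseteq> V" using d V unfolding sw_def by auto
    fix i assume i: "i < length (map (sw v v') S)"
    then obtain u where u: "u \<in> closed_nbhd V E (S ! i)"
      "card {j. j < i \<and> u \<in> closed_nbhd V E (S ! j)} \<le> 1" using c by auto
    have e: "{j. j < i \<and> sw v v' u \<in> closed_nbhd V E (map (sw v v') S ! j)}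
        = {j. j < i \<and> u \<in> closed_nbhd V E (S ! j)}"
      using i sw_N[OF assms(1-3)] by auto
    show "\<exists>u\<in>closed_nbhd V E (map (sw v v') S ! i).
          card {j. j < i \<and> u \<in> closed_nbhd V E (map (sw v v') S ! j)} \<le> 1"
      apply (rule bexI[of _ "sw v v' u"])
      using e u i sw_N[OF assms(1-3)] by auto
  qed
qed

lemma part2core:
  assumes G: "simple_graph V E" and tw: "false_twins V E v v'" and ne: "v \<noteq> v'"
    and D: "is_DNS V E S"
    and C: "v \<in> set S \<longrightarrow> v' \<in> set (takeWhile (\<lambda>y. y \<noteq> v) S)"
  shows "is_DNS (V - {v'}) E (filter (\<lambda>y. y \<noteq> v') S)"
proof -
  have V: "v \<in> V" "v' \<in> V" using tw unfolding false_twins_def by auto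
  have t: "\<And>x. E x v \<longleftrightarrow> E x v'" using E_twin[OF G tw] by blast
  have d: "distinct S" "set S \<subseteq> V" using D by (auto simp: is_DNS_def)
  have GG: "\<forall>xs x ys. S = xs @ x # ys \<longrightarrow>
      (\<exists>u\<in>closed_nbhd V E x. length (filter (\<lambda>y. u \<in> closed_nbhd V E y) xs) \<le> 1)"
    using D[unfolded DNS_iff] by (rule conjunct2[OF conjunct2])
  show ?thesis unfolding DNS_iff
  proof (intro conjI allI impI)
    show "distinct (filter (\<lambda>y. y \<noteq> v') S)" using d by simp
    show "set (filter (\<lambda>y. y \<noteq> v') S) \<subseteq> V - {v'}" using d by auto
    fix xs' x ys' assume F: "filter (\<lambda>y. y \<noteq> v') S = xs' @ x # ys'"
    then obtain xs ys where S: "S = xs @ x # ys" and xs': "filter (\<lambda>y. y \<noteq> v') xs = xs'"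
      using filter_split by metis
    have "x \<in> set (filter (\<lambda>y. y \<noteq> v') S)" using F by simp
    then have xv: "x \<noteq> v'" by simp
    have dxs: "distinct xs" using d S by simp
    have Cxs: "v \<in> set xs \<Longrightarrow> v' \<in> set xs"
    proof -
      assume vx: "v \<in> set xs"
      then have "v' \<in> set (takeWhile (\<lambda>y. y \<noteq> v) S)" using C S by auto
      also have "takeWhile (\<lambda>y. y \<noteq> v) S = takeWhile (\<lambda>y. y \<noteq> v) xs"
        using S vx by simp
      finally show "v' \<in> set xs" by (meson set_takeWhileD)
    qed
    obtain u where u: "u \<in> closed_nbhd V E x"
      "length (filter (\<lambda>y. u \<in> closed_nbhd V E y) xs) \<le> 1" using GG S by blast
    show "\<exists>u\<in>closed_nbhd (V - {v'}) E x.
          length (filter (\<lambda>y. u \<in> closed_nbhd (V - {v'}) E y) xs') \<le> 1"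
    proof (cases "u = v'")
      case False
      have "u \<in> closed_nbhd (V - {v'}) E x" using u(1) False
        by (auto simp: closed_nbhd_def open_nbhd_def)
      moreover have "length (filter (\<lambda>y. u \<in> closed_nbhd (V - {v'}) E y) xs')
          \<le> length (filter (\<lambda>y. u \<in> closed_nbhd V E y) xs)"
        unfolding xs'[symmetric] filter_filter
        by (intro len_filter_mono) (auto simp: closed_nbhd_def open_nbhd_def)
      ultimately show ?thesis using u(2) le_trans by blast
    next
      case True
      then have "E x v'" using u(1) xv by (auto simp: closed_nbhd_def open_nbhd_def)
      then have Exv: "E x v" using t by blast
      have vN: "v \<in> closed_nbhd (V - {v'}) E x" using Exv V ne
        by (auto simp: closed_nbhd_def open_nbhd_def)
      have L: "length (filter (\<lambda>y. v \<in> closed_nbhd (V - {v'}) E y) xs')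
          = card ({y. y \<noteq> v' \<and> v \<in> closed_nbhd (V - {v'}) E y} \<inter> set xs)"
        unfolding xs'[symmetric] filter_filter using dxs by (simp add: distinct_length_filter)
      have R: "length (filter (\<lambda>y. u \<in> closed_nbhd V E y) xs)
          = card ({y. v' \<in> closed_nbhd V E y} \<inter> set xs)"
        using dxs True by (simp add: distinct_length_filter)
      define A where "A = {y. y \<noteq> v' \<and> y \<noteq> v \<and> E y v} \<inter> set xs"
      have fA: "finite A" unfolding A_def by simp
      have A1: "{y. y \<noteq> v' \<and> v \<in> closed_nbhd (V - {v'}) E y} \<inter> set xs
          = A \<union> ({v} \<inter> set xs)"
        unfolding A_def using V ne G
        by (auto simp: closed_nbhd_def open_nbhd_def simple_graph_def)
      have A2: "A \<union> ({v'} \<inter> set xs) \<subseteq> {y. v' \<in> closed_nbhd V E y} \<inter> set xs"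
        unfolding A_def using V ne t
        by (auto simp: closed_nbhd_def open_nbhd_def)
      have "card (A \<union> ({v} \<inter> set xs)) \<le> card (A \<union> ({v'} \<inter> set xs))"
      proof (cases "v \<in> set xs")
        case True
        then have "v' \<in> set xs" using Cxs by blast
        then have "A \<union> ({v} \<inter> set xs) = insert v A" "A \<union> ({v'} \<inter> set xs) = insert v' A"
          using True by auto
        moreover have "v \<notin> A" "v' \<notin> A" unfolding A_def by auto
        ultimately show ?thesis using fA by simp
      next
        case False
        then show ?thesis using fA by (intro card_mono) auto
      qed
      also have "\<dots> \<le> card ({y. v' \<in> closed_nbhd V E y} \<inter> set xs)"
        using A2 by (intro card_mono) auto
      finally have "length (filter (\<lambda>y. v \<in> closed_nbhd (V - {v'}) E y) xs') \<le> 1"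
        using L R A1 u(2) by simp
      then show ?thesis using vN by blast
    qed
  qed
qed

lemma filter_len:
  assumes "distinct S"
  shows "length S \<le> length (filter (\<lambda>y. y \<noteq> w) S) + 1"
proof -
  have "length (filter (\<lambda>y. \<not> y \<noteq> w) S) = card ({y. \<not> y \<noteq> w} \<inter> set S)"
    using assms by (simp add: distinct_length_filter)
  also have "\<dots> \<le> card {w}" by (intro card_mono) auto
  finally show ?thesis using sum_length_filter_compl[of "\<lambda>y. y \<noteq> w" S] by simp
qed

theorem proposition7:
  fixes V :: "'a set" and E :: "'a \<Rightarrow> 'a \<Rightarrow> bool" and v v' :: 'a
  assumes "simple_graph V E"
    and "v \<noteq> v'"
    and "false_twins V E v v'"
  shows "gamma_gr2 (del_vertex V v') E \<le> gamma_gr2 V E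
    \<and> gamma_gr2 V E \<le> gamma_gr2 (del_vertex V v') E + 1
    \<and> (\<forall>S. is_MDNS V E S \<and> gamma_gr2 V E = gamma_gr2 (del_vertex V v') E + 1
           \<longrightarrow> v \<in> set S \<or> v' \<in> set S)"
proof -
  have fV: "finite V" using assms(1) by (simp add: simple_graph_def)
  have fV': "finite (V - {v'})" using fV by simp
  have P1: "gamma_gr2 (V - {v'}) E \<le> gamma_gr2 V E"
  proof -
    obtain S where "is_DNS (V - {v'}) E S" "length S = gamma_gr2 (V - {v'}) E"
      using gamma_ex[OF fV'] by blast
    then show ?thesis using part1 gamma_ge[OF fV] by metis
  qed
  have P2: "gamma_gr2 V E \<le> gamma_gr2 (V - {v'}) E + 1"
  proof -
    obtain S where S: "is_DNS V E S" "length S = gamma_gr2 V E"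
      using gamma_ex[OF fV] by blast
    define c where "c = (v \<in> set S \<and> v' \<notin> set (takeWhile (\<lambda>y. y \<noteq> v) S))"
    define S' where "S' = (if c then map (sw v v') S else S)"
    have D': "is_DNS V E S'" unfolding S'_def using swap_DNS[OF assms(1,3,2) S(1)] S(1) by simp
    have len: "length S' = length S" unfolding S'_def by simp
    have C: "v \<in> set S' \<longrightarrow> v' \<in> set (takeWhile (\<lambda>y. y \<noteq> v) S')"
    proof (cases c)
      case False
      then have "S' = S" unfolding S'_def by simp
      then show ?thesis using False unfolding c_def by auto
    next
      case True
      then have vS: "v \<in> set S" and nv: "v' \<notin> set (takeWhile (\<lambda>y. y \<noteq> v) S)"
        unfolding c_def by auto
      define a where "a = takeWhile (\<lambda>y. y \<noteq> v) S"
      have "dropWhile (\<lambda>y. y \<noteq> v) S \<noteq> []" using vS by (simp add: dropWhile_eq_Nil_conv)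
      then obtain z b where db: "dropWhile (\<lambda>y. y \<noteq> v) S = z # b" by (cases "dropWhile (\<lambda>y. y \<noteq> v) S") auto
      then have "z = v" using hd_dropWhile[of "\<lambda>y. y \<noteq> v" S] by auto
      then have Sab: "S = a @ v # b" using db takeWhile_dropWhile_id[of "\<lambda>y. y \<noteq> v" S] a_def by simp
      have va: "v \<notin> set a" "v' \<notin> set a" unfolding a_def using nv
        by (auto dest: set_takeWhileD)
      show ?thesis
      proof
        assume "v \<in> set S'"
        then have "v \<in> sw v v' ` set S" using True unfolding S'_def by simp
        then have "v' \<in> set S" unfolding sw_def using assms(2) by (auto split: if_splits)
        then have "v' \<in> set b" using Sab va assms(2) by auto
        then obtain c1 d1 where "b = c1 @ v' # d1" by (meson split_list)
        then have "S' = map (sw v v') a @ v' # map (sw v v') c1 @ v # map (sw v v') d1"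
          using True Sab unfolding S'_def sw_def by simp
        moreover have "\<And>y. y \<in> set (map (sw v v') a) \<Longrightarrow> y \<noteq> v"
          using va unfolding sw_def by auto
        ultimately show "v' \<in> set (takeWhile (\<lambda>y. y \<noteq> v) S')"
          using assms(2) takeWhile_append2[of "map (sw v v') a" "\<lambda>y. y \<noteq> v"
              "v' # map (sw v v') c1 @ v # map (sw v v') d1"] by auto
      qed
    qed
    have dS': "distinct S'" using D' by (simp add: is_DNS_def)
    have "is_DNS (V - {v'}) E (filter (\<lambda>y. y \<noteq> v') S')"
      by (rule part2core[OF assms(1,3,2) D' C])
    then have "length (filter (\<lambda>y. y \<noteq> v') S') \<le> gamma_gr2 (V - {v'}) E"
      using gamma_ge[OF fV'] by blast
    then show ?thesis using filter_len[OF dS', of v'] len S(2) by simp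
  qed
  have P3: "\<forall>S. is_MDNS V E S \<and> gamma_gr2 V E = gamma_gr2 (V - {v'}) E + 1
           \<longrightarrow> v \<in> set S \<or> v' \<in> set S"
  proof (intro allI impI)
    fix S assume H: "is_MDNS V E S \<and> gamma_gr2 V E = gamma_gr2 (V - {v'}) E + 1"
    show "v \<in> set S \<or> v' \<in> set S"
    proof (rule ccontr)
      assume "\<not> (v \<in> set S \<or> v' \<in> set S)"
      then have n: "v \<notin> set S" "v' \<notin> set S" by auto
      have "is_DNS (V - {v'}) E (filter (\<lambda>y. y \<noteq> v') S)"
        using part2core[OF assms(1,3,2)] H n unfolding is_MDNS_def by blast
      moreover have "filter (\<lambda>y. y \<noteq> v') S = S" using n by (auto simp add: filter_id_conv)
      ultimately have "length S \<le> gamma_gr2 (V - {v'}) E" using gamma_ge[OF fV'] by metis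
      then show False using H unfolding is_MDNS_def by simp
    qed
  qed
  show ?thesis using P1 P2 P3 unfolding del_vertex_def by blast
qed

end
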